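(* Let $\pi\in[0,1]$, $\epsilon\in\left[0,\tfrac12\right]$, $g>0$ and $c\ge 0$ with $c<(1-\pi)(1-\epsilon)-\pi\epsilon g$. Let $\tilde h\in(0,1)$. Define, for $h\in[0,1]$, the expected aggregate production $$F(h)=\begin{cases}(1-h)+h\left[(1+\pi g)(1-\epsilon)+\pi\epsilon\right] & h<\tilde h \quad(\text{agents exert effort}),\\ (1-h)+h\pi(1+g) & h>\tilde h\quad(\text{agents shirk}),\end{cases}$$ and the expected welfare $$W(h)=\begin{cases}(1-h)+h\left[(1+\pi g)(1-\epsilon)+\pi\epsilon-c\right] & h<\tilde h,\\ (1-h)+h\pi(1+g) & h>\tilde h.\end{cases}$$ Then expected production and welfare drop as $h$ surpasses $\tilde h$: $\lim_{h\uparrow\tilde h}F(h)>\lim_{h\downarrow\tilde h}F(h)$ and $\lim_{h\uparrow\tilde h}W(h)>\lim_{h\downarrow\tilde h}W(h)$.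
   Context: Model: a unit mass of agents; agents $i\le h$ have access to a new technology that is good with probability $\pi$ (production $1+g$ if used and good, $0$ if used and bad, $1$ if not used). Agents who exert effort pay $c$ and obtain a signal that is wrong with probability $\epsilon$, which they follow; agents who shirk use the technology. $\tilde h$ is the threshold of the principal's firing policy: below it she credibly threatens punishment and agents exert effort, above it she does not and agents shirk. Welfare is output less agents' effort costs. *)

theory Defs
  imports Complex_Main
begin

text \<open>Expected aggregate production F(h). The value at h = ht itself is not
specified in the paper; we use the shirking branch there, which does not affect
the one-sided limits.\<close>
definition production :: "real \<Rightarrow> real \<Rightarrow> real \<Rightarrow> real \<Rightarrow> real \<Rightarrow> real" where
  "production \<pi> \<epsilon> g ht h =
     (if h < ht then (1 - h) + h * ((1 + \<pi> * g) * (1 - \<epsilon>) + \<pi> * \<epsilon>)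
      else (1 - h) + h * \<pi> * (1 + g))"

definition welfare :: "real \<Rightarrow> real \<Rightarrow> real \<Rightarrow> real \<Rightarrow> real \<Rightarrow> real \<Rightarrow> real" where
  "welfare \<pi> \<epsilon> g c ht h =
     (if h < ht then (1 - h) + h * ((1 + \<pi> * g) * (1 - \<epsilon>) + \<pi> * \<epsilon> - c)
      else (1 - h) + h * \<pi> * (1 + g))"

end

theory Submission
  imports Defs
begin

theorem corollary1:
  fixes \<pi> \<epsilon> g c ht :: real
  assumes "0 \<le> \<pi>" "\<pi> \<le> 1" "0 \<le> \<epsilon>" "\<epsilon> \<le> 1/2" "g > 0" "c \<ge> 0"
    and "c < (1 - \<pi>) * (1 - \<epsilon>) - \<pi> * \<epsilon> * g"
    and "0 < ht" "ht < 1"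
  shows "\<exists>FL FR WL WR.
           (production \<pi> \<epsilon> g ht \<longlongrightarrow> FL) (at ht within {0..<ht}) \<and>
           (production \<pi> \<epsilon> g ht \<longlongrightarrow> FR) (at ht within {ht<..1}) \<and>
           (welfare \<pi> \<epsilon> g c ht \<longlongrightarrow> WL) (at ht within {0..<ht}) \<and>
           (welfare \<pi> \<epsilon> g c ht \<longlongrightarrow> WR) (at ht within {ht<..1}) \<and>
           FL > FR \<and> WL > WR"
proof -
  define A where "A = (1 + \<pi> * g) * (1 - \<epsilon>) + \<pi> * \<epsilon>"
  define B where "B = \<pi> * (1 + g)"
  have AB: "A - B = (1 - \<pi>) * (1 - \<epsilon>) - \<pi> * \<epsilon> * g"
    unfolding A_def B_def by (simp add: algebra_simps)
  have evL: "\<And>P. (\<And>x. x < ht \<Longrightarrow> P x) \<Longrightarrow> eventually P (at ht within {0..<ht})"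
    by (auto simp: eventually_at_filter intro!: always_eventually)
  have evR: "\<And>P. (\<And>x. x > ht \<Longrightarrow> P x) \<Longrightarrow> eventually P (at ht within {ht<..1})"
    by (auto simp: eventually_at_filter intro!: always_eventually)
  have lim: "((\<lambda>h. (1 - h) + h * K) \<longlongrightarrow> (1 - ht) + ht * K) (at ht within S)" for K :: real and S
    by (intro tendsto_intros)
  have limB: "((\<lambda>h. (1 - h) + h * \<pi> * (1 + g)) \<longlongrightarrow> (1 - ht) + ht * B) (at ht within S)" for S
  proof -
    have "(\<lambda>h. (1 - h) + h * \<pi> * (1 + g)) = (\<lambda>h. (1 - h) + h * B)"
      by (auto simp: B_def algebra_simps)
    thus ?thesis using lim[of B S] by simp
  qed
  have F1: "(production \<pi> \<epsilon> g ht \<longlongrightarrow> (1 - ht) + ht * A) (at ht within {0..<ht})"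
    by (rule tendsto_cong[THEN iffD1, OF _ lim]) (rule evL, simp add: production_def A_def)
  have F2: "(production \<pi> \<epsilon> g ht \<longlongrightarrow> (1 - ht) + ht * B) (at ht within {ht<..1})"
    by (rule tendsto_cong[THEN iffD1, OF _ limB]) (rule evR, simp add: production_def)
  have W1: "(welfare \<pi> \<epsilon> g c ht \<longlongrightarrow> (1 - ht) + ht * (A - c)) (at ht within {0..<ht})"
    by (rule tendsto_cong[THEN iffD1, OF _ lim]) (rule evL, simp add: welfare_def A_def)
  have W2: "(welfare \<pi> \<epsilon> g c ht \<longlongrightarrow> (1 - ht) + ht * B) (at ht within {ht<..1})"
    by (rule tendsto_cong[THEN iffD1, OF _ limB]) (rule evR, simp add: welfare_def)
  have pos: "A - c - B > 0" "A - B > 0" using AB assms(6,7) by linarith+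
  have "ht * (A - c - B) > 0" "ht * (A - B) > 0" using pos assms(8) by simp_all
  hence "(1 - ht) + ht * A > (1 - ht) + ht * B" "(1 - ht) + ht * (A - c) > (1 - ht) + ht * B"
    by (simp_all add: algebra_simps)
  thus ?thesis using F1 F2 W1 W2 by blast
qed

end
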